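(* Let $\Phi$ be a $(3,3)$-monotone formula with $n$ clauses and $n$ variables, and let $G_\Phi$ be the graph described in the context. If $\Phi$ is 1-satisfiable, then $\mathcal{F}(\overline{G_\Phi})=\{\frac{7}{3}n\}$; if $\Phi$ is not 1-satisfiable, then $\mathcal{F}(\overline{G_\Phi})=\emptyset$.
   Context: A $(3,3)$-monotone formula is a set $C$ of clauses over a variable set $X$, where each clause consists of three distinct positive variables and each variable occurs in exactly three clauses, so $|C|=|X|=n$. It is 1-satisfiable if some truth assignment makes exactly one variable of each clause true. The graph $G_\Phi$ has $5n$ vertices: for each clause $c$ with variables $x,y,z$ (in an arbitrary fixed order) there are vertices $c(x),c(y),c(z),a_1^c,a_2^c$ forming the path $c(x)\,a_1^c\,c(y)\,a_2^c\,c(z)$; for each variable $x$ occurring in clauses $c,c',c''$, the vertices $c(x),c'(x),c''(x)$ form a triangle; there are no other edges. $\overline{G}$ denotes the complement. A colouring is a map to $\mathbb{Z}^+$ with adjacent vertices receiving distinct colours; a fall $k$-colouring is a colouring with exactly $k$ colours in which every vertex is adjacent to a vertex of every colour other than its own; $\mathcal{F}(G)$ is the set of $k$ for which $G$ has a fall $k$-colouring. *)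

theory Defs
  imports Complex_Main
begin

definition monotone33 :: "'v set \<Rightarrow> 'v set set \<Rightarrow> bool" where
  "monotone33 X C \<longleftrightarrow> finite X \<and> (\<forall>c\<in>C. c \<subseteq> X \<and> card c = 3)
     \<and> (\<forall>x\<in>X. card {c\<in>C. x \<in> c} = 3)"

definition one_satisfiable :: "'v set \<Rightarrow> 'v set set \<Rightarrow> bool" where
  "one_satisfiable X C \<longleftrightarrow> (\<exists>T\<subseteq>X. \<forall>c\<in>C. card (c \<inter> T) = 1)"

definition clause_order :: "'v set set \<Rightarrow> ('v set \<Rightarrow> 'v list) \<Rightarrow> bool" where
  "clause_order C ord \<longleftrightarrow> (\<forall>c\<in>C. distinct (ord c) \<and> set (ord c) = c)"

datatype 'v gvert = CV "'v set" 'v | A1 "'v set" | A2 "'v set"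

definition GPhi_verts :: "'v set set \<Rightarrow> 'v gvert set" where
  "GPhi_verts C = {CV c x | c x. c \<in> C \<and> x \<in> c} \<union> A1 ` C \<union> A2 ` C"

definition GPhi_arc :: "'v set set \<Rightarrow> ('v set \<Rightarrow> 'v list) \<Rightarrow> 'v gvert \<Rightarrow> 'v gvert \<Rightarrow> bool" where
  "GPhi_arc C ord u w \<longleftrightarrow>
     (\<exists>c\<in>C. (u = CV c (ord c ! 0) \<and> w = A1 c) \<or> (u = A1 c \<and> w = CV c (ord c ! 1))
           \<or> (u = CV c (ord c ! 1) \<and> w = A2 c) \<or> (u = A2 c \<and> w = CV c (ord c ! 2)))
   \<or> (\<exists>x c c'. c \<in> C \<and> c' \<in> C \<and> c \<noteq> c' \<and> x \<in> c \<and> x \<in> c' \<and> u = CV c x \<and> w = CV c' x)"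

definition GPhi_adj :: "'v set set \<Rightarrow> ('v set \<Rightarrow> 'v list) \<Rightarrow> 'v gvert \<Rightarrow> 'v gvert \<Rightarrow> bool" where
  "GPhi_adj C ord u w \<longleftrightarrow> GPhi_arc C ord u w \<or> GPhi_arc C ord w u"

definition compl_adj :: "'a set \<Rightarrow> ('a \<Rightarrow> 'a \<Rightarrow> bool) \<Rightarrow> 'a \<Rightarrow> 'a \<Rightarrow> bool" where
  "compl_adj V E u w \<longleftrightarrow> u \<in> V \<and> w \<in> V \<and> u \<noteq> w \<and> \<not> E u w"

definition fall_colouring :: "'a set \<Rightarrow> ('a \<Rightarrow> 'a \<Rightarrow> bool) \<Rightarrow> ('a \<Rightarrow> nat) \<Rightarrow> nat \<Rightarrow> bool" where
  "fall_colouring V E f k \<longleftrightarrow>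
     (\<forall>v\<in>V. f v \<ge> 1)
   \<and> (\<forall>u\<in>V. \<forall>w\<in>V. E u w \<longrightarrow> f u \<noteq> f w)
   \<and> card (f ` V) = k
   \<and> (\<forall>v\<in>V. \<forall>j\<in>f ` V. j \<noteq> f v \<longrightarrow> (\<exists>u\<in>V. E v u \<and> f u = j))"

definition fall_spectrum :: "'a set \<Rightarrow> ('a \<Rightarrow> 'a \<Rightarrow> bool) \<Rightarrow> nat set" where
  "fall_spectrum V E = {k. \<exists>f. fall_colouring V E f k}"

end

theory Submission imports Defs begin

locale G33 =
  fixes X :: "'v set" and C :: "'v set set" and ord :: "'v set \<Rightarrow> 'v list"
  assumes mono: "monotone33 X C" and co: "clause_order C ord"
begin

abbreviation "V \<equiv> GPhi_verts C"
abbreviation "E \<equiv> GPhi_adj C ord"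
abbreviation "p0 c \<equiv> ord c ! 0"
abbreviation "p1 c \<equiv> ord c ! 1"
abbreviation "p2 c \<equiv> ord c ! 2"

lemma finX: "finite X" using mono by (simp add: monotone33_def)
lemma subX: "c \<in> C \<Longrightarrow> c \<subseteq> X" using mono by (simp add: monotone33_def)
lemma finC: "finite C"
proof -
  have "C \<subseteq> Pow X" using subX by auto
  moreover have "finite (Pow X)" using finX by simp
  ultimately show ?thesis by (rule finite_subset)
qed

lemma ord3: assumes "c \<in> C"
  shows "p0 c \<noteq> p1 c \<and> p0 c \<noteq> p2 c \<and> p1 c \<noteq> p2 c \<and> c = {p0 c, p1 c, p2 c}"
proof -
  have d: "distinct (ord c)" and s: "set (ord c) = c" using co assms by (auto simp: clause_order_def)
  have "card c = 3" using mono assms by (simp add: monotone33_def)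
  hence "length (ord c) = 3" using distinct_card[OF d] s by simp
  then obtain a b e where "ord c = [a,b,e]"
    by (auto simp: numeral_3_eq_3 length_Suc_conv)
  thus ?thesis using d s by auto
qed

lemma p_in: "c \<in> C \<Longrightarrow> p0 c \<in> c \<and> p1 c \<in> c \<and> p2 c \<in> c"
  using ord3 by blast

lemma in_c: "c \<in> C \<Longrightarrow> x \<in> c \<Longrightarrow> x = p0 c \<or> x = p1 c \<or> x = p2 c"
  using ord3 by blast

lemma V_CV[simp]: "CV c x \<in> V \<longleftrightarrow> c \<in> C \<and> x \<in> c" by (auto simp: GPhi_verts_def)
lemma V_A1[simp]: "A1 c \<in> V \<longleftrightarrow> c \<in> C" by (auto simp: GPhi_verts_def)
lemma V_A2[simp]: "A2 c \<in> V \<longleftrightarrow> c \<in> C" by (auto simp: GPhi_verts_def)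

lemma V_cases: assumes "v \<in> V"
  obtains c x where "v = CV c x" "c \<in> C" "x \<in> c" | c where "v = A1 c" "c \<in> C" | c where "v = A2 c" "c \<in> C"
  using assms by (cases v) auto

lemma V_eq: "V = (\<lambda>(c,x). CV c x) ` (SIGMA c:C. c) \<union> A1 ` C \<union> A2 ` C"
    unfolding GPhi_verts_def by auto
lemma finV: "finite V"
proof -
  have fS: "finite (SIGMA c:C. c)" using finC by (rule finite_SigmaI) (meson finX subX rev_finite_subset)
  show ?thesis unfolding V_eq by (intro finite_UnI finite_imageI fS finC)
qed

lemma E_A1[simp]: "E (A1 c) w \<longleftrightarrow> c \<in> C \<and> (w = CV c (p0 c) \<or> w = CV c (p1 c))"
  by (auto simp: GPhi_adj_def GPhi_arc_def)
lemma E_A2[simp]: "E (A2 c) w \<longleftrightarrow> c \<in> C \<and> (w = CV c (p1 c) \<or> w = CV c (p2 c))"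
  by (auto simp: GPhi_adj_def GPhi_arc_def)
lemma E_CV_A1[simp]: "E (CV d x) (A1 c) \<longleftrightarrow> c \<in> C \<and> d = c \<and> (x = p0 c \<or> x = p1 c)"
  by (auto simp: GPhi_adj_def GPhi_arc_def)
lemma E_CV_A2[simp]: "E (CV d x) (A2 c) \<longleftrightarrow> c \<in> C \<and> d = c \<and> (x = p1 c \<or> x = p2 c)"
  by (auto simp: GPhi_adj_def GPhi_arc_def)
lemma E_CV_CV[simp]: "E (CV c x) (CV d y) \<longleftrightarrow> x = y \<and> c \<noteq> d \<and> c \<in> C \<and> d \<in> C \<and> x \<in> c \<and> x \<in> d"
  by (auto simp: GPhi_adj_def GPhi_arc_def)

lemma other: assumes "x \<in> X" shows "\<exists>d\<in>C. x \<in> d \<and> d \<noteq> c"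
proof -
  have "card {d\<in>C. x \<in> d} = 3" using mono assms by (simp add: monotone33_def)
  hence "card ({d\<in>C. x \<in> d} - {c}) \<ge> 2" by (simp add: card_Diff_singleton_if)
  have "{d\<in>C. x \<in> d} - {c} \<noteq> {}" 
  proof (rule notI)
    assume h: "{d\<in>C. x \<in> d} - {c} = {}"
    have "card ({d\<in>C. x \<in> d} - {c}) = 0" unfolding h by simp
    thus False using \<open>card ({d\<in>C. x \<in> d} - {c}) \<ge> 2\<close> by simp
  qed
  thus ?thesis by auto
qed


definition "cx x = (SOME d. d \<in> C \<and> x \<in> d)"

lemma cx: "x \<in> X \<Longrightarrow> cx x \<in> C \<and> x \<in> cx x"
  unfolding cx_def using other[of x undefined] by (metis (mono_tags, lifting) someI_ex)

lemma dc: assumes T: "T \<subseteq> X" shows "(\<Sum>c\<in>C. card (c \<inter> T)) = 3 * card T"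
proof -
  have fT: "finite T" using T finX finite_subset by auto
  have "(\<Sum>c\<in>C. card (c \<inter> T)) = (\<Sum>c\<in>C. \<Sum>x\<in>T. if x \<in> c then 1 else 0)"
  proof (rule sum.cong[OF refl])
    fix c
    have "c \<inter> T = {x \<in> T. x \<in> c}" by auto
    hence "card (c \<inter> T) = (\<Sum>x\<in>{x \<in> T. x \<in> c}. 1)" by simp
    also have "\<dots> = (\<Sum>x\<in>T. if x \<in> c then 1 else 0)" using fT by (rule sum.inter_filter)
    finally show "card (c \<inter> T) = (\<Sum>x\<in>T. if x \<in> c then 1 else 0)" .
  qed
  also have "\<dots> = (\<Sum>x\<in>T. \<Sum>c\<in>C. if x \<in> c then 1 else 0)" by (rule sum.swap)
  also have "\<dots> = (\<Sum>x\<in>T. (3::nat))"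
  proof (rule sum.cong[OF refl])
    fix x assume "x \<in> T"
    hence "card {c\<in>C. x \<in> c} = 3" using mono T by (auto simp: monotone33_def)
    moreover have "(\<Sum>c\<in>{c\<in>C. x \<in> c}. 1) = (\<Sum>c\<in>C. if x \<in> c then 1 else (0::nat))"
      using finC by (rule sum.inter_filter)
    ultimately show "(\<Sum>c\<in>C. if x \<in> c then 1 else 0) = (3::nat)" by simp
  qed
  finally show ?thesis by simp
qed

lemma dc1: assumes "T \<subseteq> X" "\<forall>c\<in>C. card (c \<inter> T) = 1" shows "3 * card T = card C"
  using dc[OF assms(1)] assms(2) by simp

context
  fixes f :: "'v gvert \<Rightarrow> nat" and k :: nat
  assumes fc: "fall_colouring V (compl_adj V E) f k"
begin

lemma P1: "u \<in> V \<Longrightarrow> w \<in> V \<Longrightarrow> u \<noteq> w \<Longrightarrow> f u = f w \<Longrightarrow> E u w"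
  using fc unfolding fall_colouring_def compl_adj_def by blast

lemma P2: assumes "v \<in> V" "u \<in> V" "f u \<noteq> f v"
  shows "\<exists>w\<in>V. f w = f u \<and> w \<noteq> v \<and> \<not> E v w"
proof -
  have "\<exists>w\<in>V. compl_adj V E v w \<and> f w = f u"
    using fc assms unfolding fall_colouring_def by blast
  thus ?thesis unfolding compl_adj_def by blast
qed

lemma A1_partner: assumes c: "c \<in> C"
  shows "f (A1 c) = f (CV c (p0 c)) \<or> f (A1 c) = f (CV c (p1 c))"
proof (rule ccontr)
  assume ne: "\<not> ?thesis"
  have pc: "p0 c \<in> c" "p1 c \<in> c" "p0 c \<noteq> p1 c" using p_in[OF c] ord3[OF c] by auto
  obtain w where w: "w\<in>V" "f w = f (A1 c)" "w \<noteq> CV c (p0 c)" "\<not> E (CV c (p0 c)) w"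
    using P2[of "CV c (p0 c)" "A1 c"] ne c pc by auto
  have "w \<noteq> A1 c" using w(4) c by auto
  hence "E (A1 c) w" using P1[of "A1 c" w] w c by auto
  hence "w = CV c (p1 c)" using w(3) by simp
  thus False using w ne by auto
qed

lemma A2_partner: assumes c: "c \<in> C"
  shows "f (A2 c) = f (CV c (p1 c)) \<or> f (A2 c) = f (CV c (p2 c))"
proof (rule ccontr)
  assume ne: "\<not> ?thesis"
  have pc: "p2 c \<in> c" "p1 c \<in> c" "p2 c \<noteq> p1 c" using p_in[OF c] ord3[OF c] by auto
  obtain w where w: "w\<in>V" "f w = f (A2 c)" "w \<noteq> CV c (p2 c)" "\<not> E (CV c (p2 c)) w"
    using P2[of "CV c (p2 c)" "A2 c"] ne c pc by auto
  have "w \<noteq> A2 c" using w(4) c by auto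
  hence "E (A2 c) w" using P1[of "A2 c" w] w c by auto
  hence "w = CV c (p1 c)" using w(3) by auto
  thus False using w ne by auto
qed

lemma CV_distinct: assumes "c \<in> C" "x \<in> c" "y \<in> c" "x \<noteq> y"
  shows "f (CV c x) \<noteq> f (CV c y)"
  using P1[of "CV c x" "CV c y"] assms by auto

lemma A12_distinct: "c \<in> C \<Longrightarrow> f (A1 c) \<noteq> f (A2 c)"
  using P1[of "A1 c" "A2 c"] by auto

definition free where "free c x \<longleftrightarrow> f (CV c x) \<noteq> f (A1 c) \<and> f (CV c x) \<noteq> f (A2 c)"

lemma free_unique: assumes c: "c \<in> C" shows "\<exists>!x. x \<in> c \<and> free c x"
proof -
  have o: "p0 c \<noteq> p1 c" "p0 c \<noteq> p2 c" "p1 c \<noteq> p2 c" and ceq: "c = {p0 c, p1 c, p2 c}" using ord3[OF c] by auto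
  have pc: "p0 c \<in> c" "p1 c \<in> c" "p2 c \<in> c" using p_in[OF c] by auto
  have d01: "f (CV c (p0 c)) \<noteq> f (CV c (p1 c))" using CV_distinct c pc o by blast
  have d02: "f (CV c (p0 c)) \<noteq> f (CV c (p2 c))" using CV_distinct c pc o by blast
  have d12: "f (CV c (p1 c)) \<noteq> f (CV c (p2 c))" using CV_distinct c pc o by blast
  have a1: "f (A1 c) = f (CV c (p0 c)) \<or> f (A1 c) = f (CV c (p1 c))" by (rule A1_partner[OF c])
  have a2: "f (A2 c) = f (CV c (p1 c)) \<or> f (A2 c) = f (CV c (p2 c))" by (rule A2_partner[OF c])
  have a12: "f (A1 c) \<noteq> f (A2 c)" by (rule A12_distinct[OF c])
  have cases: "(f (A1 c) = f (CV c (p0 c)) \<and> f (A2 c) = f (CV c (p1 c)))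
     \<or> (f (A1 c) = f (CV c (p0 c)) \<and> f (A2 c) = f (CV c (p2 c)))
     \<or> (f (A1 c) = f (CV c (p1 c)) \<and> f (A2 c) = f (CV c (p2 c)))"
    using a1 a2 a12 by auto
  have ex: "\<And>a b d P. c = {a,b,d} \<Longrightarrow> a \<noteq> b \<Longrightarrow> a \<noteq> d \<Longrightarrow> b \<noteq> d \<Longrightarrow> P a \<Longrightarrow> \<not> P b \<Longrightarrow> \<not> P d
     \<Longrightarrow> \<exists>!x. x \<in> c \<and> P x" by auto
  from cases show ?thesis
  proof (elim disjE conjE)
    assume h: "f (A1 c) = f (CV c (p0 c))" "f (A2 c) = f (CV c (p1 c))"
    show ?thesis
      by (rule ex[of "p2 c" "p0 c" "p1 c"]) (use ceq o d01 d02 d12 h in \<open>auto simp: free_def\<close>)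
  next
    assume h: "f (A1 c) = f (CV c (p0 c))" "f (A2 c) = f (CV c (p2 c))"
    show ?thesis
      by (rule ex[of "p1 c" "p0 c" "p2 c"]) (use ceq o d01 d02 d12 h in \<open>auto simp: free_def\<close>)
  next
    assume h: "f (A1 c) = f (CV c (p1 c))" "f (A2 c) = f (CV c (p2 c))"
    show ?thesis
      by (rule ex[of "p0 c" "p1 c" "p2 c"]) (use ceq o d01 d02 d12 h in \<open>auto simp: free_def\<close>)
  qed
qed

lemma free_same: assumes fr: "free c' x" and c': "c' \<in> C" "x \<in> c'" and c: "c \<in> C" "x \<in> c"
  shows "f (CV c x) = f (CV c' x)"
proof (rule ccontr)
  assume ne: "f (CV c x) \<noteq> f (CV c' x)"
  hence cc: "c \<noteq> c'" by auto
  obtain w where w: "w\<in>V" "f w = f (CV c' x)" "w \<noteq> CV c x" "\<not> E (CV c x) w"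
    using P2[of "CV c x" "CV c' x"] ne c c' by auto
  have "w \<noteq> CV c' x" using w(4) cc c c' by auto
  hence Ew: "E (CV c' x) w" using P1[of "CV c' x" w] w c' by auto
  from w(1) show False
  proof (cases rule: V_cases)
    case (1 d y)
    have yx: "y = x" and dc': "d \<noteq> c'" using Ew unfolding 1(1) by auto
    have "d \<noteq> c" using w(3) unfolding 1(1) yx by simp
    hence "E (CV c x) w" unfolding 1(1) yx using c 1(2,3) yx by simp
    thus ?thesis using w(4) by simp
  next
    case (2 d)
    have "d = c'" using Ew unfolding 2(1) by simp
    hence "f (A1 c') = f (CV c' x)" using w(2) unfolding 2(1) by simp
    thus ?thesis using fr unfolding free_def by simp
  next
    case (3 d)
    have "d = c'" using Ew unfolding 3(1) by simp
    hence "f (A2 c') = f (CV c' x)" using w(2) unfolding 3(1) by simp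
    thus ?thesis using fr unfolding free_def by simp
  qed
qed

definition "Tf = {x \<in> X. \<exists>c\<in>C. x \<in> c \<and> free c x}"

lemma Tf_free: assumes x: "x \<in> Tf" and c: "c \<in> C" "x \<in> c" shows "free c x"
proof -
  obtain c' where c': "c' \<in> C" "x \<in> c'" "free c' x" using x unfolding Tf_def by auto
  have eq: "f (CV c x) = f (CV c' x)" by (rule free_same[OF c'(3,1,2) c])
  show ?thesis
  proof (rule ccontr)
    assume "\<not> free c x"
    hence "f (CV c' x) = f (A1 c) \<or> f (CV c' x) = f (A2 c)" using eq unfolding free_def by auto
    thus False
    proof
      assume h: "f (CV c' x) = f (A1 c)"
      hence "E (CV c' x) (A1 c)" using P1[of "CV c' x" "A1 c"] c c' by auto
      hence "c' = c" by simp
      thus False using h c'(3) unfolding free_def by auto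
    next
      assume h: "f (CV c' x) = f (A2 c)"
      hence "E (CV c' x) (A2 c)" using P1[of "CV c' x" "A2 c"] c c' by auto
      hence "c' = c" by simp
      thus False using h c'(3) unfolding free_def by auto
    qed
  qed
qed

lemma Tf_sat: "Tf \<subseteq> X \<and> (\<forall>c\<in>C. card (c \<inter> Tf) = 1)"
proof -
  have "card (c \<inter> Tf) = 1" if c: "c \<in> C" for c
  proof -
    obtain x where x: "x \<in> c" "free c x" and u: "\<And>y. y \<in> c \<Longrightarrow> free c y \<Longrightarrow> y = x"
      using free_unique[OF c] by auto
    have "x \<in> Tf" using x c subX unfolding Tf_def by auto
    have "c \<inter> Tf \<subseteq> {x}"
    proof
      fix y assume "y \<in> c \<inter> Tf"
      hence "y \<in> c" "free c y" using Tf_free[of y c] c by auto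
      thus "y \<in> {x}" using u by blast
    qed
    hence "c \<inter> Tf = {x}" using x \<open>x \<in> Tf\<close> by blast
    thus ?thesis by simp
  qed
  thus ?thesis unfolding Tf_def by auto
qed

lemma count: "card (f ` V) = 2 * card C + card Tf"
proof -
  define g where "g x = f (CV (cx x) x)" for x
  have TX: "Tf \<subseteq> X" using Tf_sat by simp
  have gfree: "f (CV c x) = g x" if "x \<in> Tf" "c \<in> C" "x \<in> c" for x c
  proof -
    have cxx: "cx x \<in> C" "x \<in> cx x" using cx TX that(1) by auto
    have "free (cx x) x" using Tf_free[OF that(1) cxx] .
    thus ?thesis unfolding g_def using free_same cxx that(2,3) by blast
  qed
  have eq: "f ` V = f ` (A1 ` C) \<union> f ` (A2 ` C) \<union> g ` Tf"
  proof (intro equalityI subsetI)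
    fix j assume "j \<in> f ` V"
    then obtain v where v: "v \<in> V" "j = f v" by auto
    from v(1) show "j \<in> f ` (A1 ` C) \<union> f ` (A2 ` C) \<union> g ` Tf"
    proof (cases rule: V_cases)
      case (1 c x)
      show ?thesis
      proof (cases "x \<in> Tf")
        case True
        thus ?thesis using gfree[OF True 1(2,3)] v 1 by auto
      next
        case False
        hence "\<not> free c x" using 1 subX unfolding Tf_def by auto
        thus ?thesis using v 1 unfolding free_def by auto
      qed
    qed (use v in auto)
  next
    fix j assume "j \<in> f ` (A1 ` C) \<union> f ` (A2 ` C) \<union> g ` Tf"
    moreover have "g ` Tf \<subseteq> f ` V" unfolding g_def using cx TX by fastforce
    ultimately show "j \<in> f ` V" by auto
  qed
  have d12: "f ` (A1 ` C) \<inter> f ` (A2 ` C) = {}"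
  proof (rule ccontr)
    assume "\<not> ?thesis"
    then obtain c d where "c \<in> C" "d \<in> C" "f (A1 c) = f (A2 d)" by auto
    thus False using P1[of "A1 c" "A2 d"] by simp
  qed
  have d3: "(f ` (A1 ` C) \<union> f ` (A2 ` C)) \<inter> g ` Tf = {}"
  proof (rule ccontr)
    assume "\<not> ?thesis"
    then obtain c x where c: "c \<in> C" and x: "x \<in> Tf" and h: "f (A1 c) = g x \<or> f (A2 c) = g x" by blast
    have cxx: "cx x \<in> C" "x \<in> cx x" using cx TX x by auto
    have fr: "free (cx x) x" using Tf_free[OF x cxx] .
    from h show False
    proof
      assume h: "f (A1 c) = g x"
      hence "E (A1 c) (CV (cx x) x)" using P1[of "A1 c" "CV (cx x) x"] c cxx unfolding g_def by simp
      hence "cx x = c" by auto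
      thus False using h fr unfolding free_def g_def by simp
    next
      assume h: "f (A2 c) = g x"
      hence "E (A2 c) (CV (cx x) x)" using P1[of "A2 c" "CV (cx x) x"] c cxx unfolding g_def by simp
      hence "cx x = c" by auto
      thus False using h fr unfolding free_def g_def by simp
    qed
  qed
  have i1: "inj_on f (A1 ` C)"
  proof (rule inj_onI)
    fix u w assume h: "u \<in> A1 ` C" "w \<in> A1 ` C" "f u = f w"
    then obtain c d where cd: "u = A1 c" "w = A1 d" "c \<in> C" "d \<in> C" by auto
    show "u = w"
    proof (rule ccontr)
      assume "u \<noteq> w"
      hence "E u w" using P1[of u w] h cd by simp
      thus False using cd by simp
    qed
  qed
  have i2: "inj_on f (A2 ` C)"
  proof (rule inj_onI)
    fix u w assume h: "u \<in> A2 ` C" "w \<in> A2 ` C" "f u = f w"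
    then obtain c d where cd: "u = A2 c" "w = A2 d" "c \<in> C" "d \<in> C" by auto
    show "u = w"
    proof (rule ccontr)
      assume "u \<noteq> w"
      hence "E u w" using P1[of u w] h cd by simp
      thus False using cd by simp
    qed
  qed
  have i3: "inj_on g Tf"
  proof (rule inj_onI)
    fix x y assume xy: "x \<in> Tf" "y \<in> Tf" "g x = g y"
    have cxx: "cx x \<in> C" "x \<in> cx x" "cx y \<in> C" "y \<in> cx y" using cx TX xy by auto
    show "x = y"
    proof (rule ccontr)
      assume "x \<noteq> y"
      hence "E (CV (cx x) x) (CV (cx y) y)" using P1[of "CV (cx x) x" "CV (cx y) y"] cxx xy(3) unfolding g_def by simp
      thus False using \<open>x \<noteq> y\<close> by simp
    qed
  qed
  have fT: "finite Tf" using TX finX finite_subset by auto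
  have c1: "card (f ` (A1 ` C)) = card C" using card_image[OF i1] card_image[of A1 C] by (simp add: inj_on_def)
  have c2: "card (f ` (A2 ` C)) = card C" using card_image[OF i2] card_image[of A2 C] by (simp add: inj_on_def)
  have c3: "card (g ` Tf) = card Tf" using card_image[OF i3] .
  have "card (f ` V) = card (f ` (A1 ` C) \<union> f ` (A2 ` C)) + card (g ` Tf)"
    unfolding eq by (rule card_Un_disjoint) (use finC fT d3 in auto)
  also have "card (f ` (A1 ` C) \<union> f ` (A2 ` C)) = card C + card C"
    using card_Un_disjoint[of "f ` (A1 ` C)" "f ` (A2 ` C)"] finC d12 c1 c2 by simp
  finally show ?thesis using c3 by simp
qed

lemma dirA: "one_satisfiable X C \<and> 3 * k = 7 * card C"
proof -
  have k: "k = card (f ` V)" using fc unfolding fall_colouring_def by simp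
  have "3 * card Tf = card C" using dc1 Tf_sat by blast
  thus ?thesis using Tf_sat k count unfolding one_satisfiable_def by auto
qed

end


definition rep :: "'v set \<Rightarrow> 'v gvert \<Rightarrow> 'v gvert" where
  "rep T v = (case v of CV c x \<Rightarrow> if x \<in> T then CV (cx x) x else if x = p0 c then A1 c
      else if x = p2 c then A2 c else if p0 c \<in> T then A1 c else A2 c
    | A1 c \<Rightarrow> A1 c | A2 c \<Rightarrow> A2 c)"

context
  fixes T :: "'v set"
  assumes TX: "T \<subseteq> X" and T1: "\<forall>c\<in>C. card (c \<inter> T) = 1"
begin

lemma T3: assumes c: "c \<in> C"
  shows "(p0 c \<in> T \<and> p1 c \<notin> T \<and> p2 c \<notin> T) \<or> (p0 c \<notin> T \<and> p1 c \<in> T \<and> p2 c \<notin> T)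
       \<or> (p0 c \<notin> T \<and> p1 c \<notin> T \<and> p2 c \<in> T)"
proof -
  have "card (c \<inter> T) = 1" using T1 c by blast
  then obtain z where z: "c \<inter> T = {z}" by (rule card_1_singletonE)
  have o: "p0 c \<noteq> p1 c" "p0 c \<noteq> p2 c" "p1 c \<noteq> p2 c" and ceq: "c = {p0 c, p1 c, p2 c}" using ord3[OF c] by auto
  have zc: "z \<in> c" and zT: "z \<in> T" using z by auto
  have u: "\<And>y. y \<in> c \<Longrightarrow> y \<in> T \<Longrightarrow> y = z" using z by auto
  have pc: "p0 c \<in> c" "p1 c \<in> c" "p2 c \<in> c" using p_in[OF c] by auto
  consider "z = p0 c" | "z = p1 c" | "z = p2 c" using in_c[OF c zc] by blast
  then show ?thesis
  proof cases
    case 1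
    have "p1 c \<notin> T" "p2 c \<notin> T" using u[OF pc(2)] u[OF pc(3)] o 1 by auto
    thus ?thesis using 1 zT by simp
  next
    case 2
    have "p0 c \<notin> T" "p2 c \<notin> T" using u[OF pc(1)] u[OF pc(3)] o 2 by auto
    thus ?thesis using 2 zT by simp
  next
    case 3
    have "p0 c \<notin> T" "p1 c \<notin> T" using u[OF pc(1)] u[OF pc(2)] o 3 by auto
    thus ?thesis using 3 zT by simp
  qed
qed

lemma rep_CV: "rep T (CV c x) = (if x \<in> T then CV (cx x) x else if x = p0 c then A1 c
      else if x = p2 c then A2 c else if p0 c \<in> T then A1 c else A2 c)"
  by (simp add: rep_def)
lemma rep_A1[simp]: "rep T (A1 c) = A1 c" by (simp add: rep_def)
lemma rep_A2[simp]: "rep T (A2 c) = A2 c" by (simp add: rep_def)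

lemma rep_V: assumes "v \<in> V" shows "rep T v \<in> V"
  using assms
proof (cases rule: V_cases)
  case (1 c x)
  then show ?thesis using cx TX by (auto simp: rep_CV)
qed auto

lemma rep_class: assumes "u \<in> V" "w \<in> V" "u \<noteq> w" "rep T u = rep T w" shows "E u w"
  using assms(1)
proof (cases rule: V_cases)
  case (1 c x)
  note u = this
  from assms(2) show ?thesis
  proof (cases rule: V_cases)
    case (1 d y)
    show ?thesis
    proof (cases "x \<in> T")
      case True
      then show ?thesis using assms(3,4) u 1 by (auto simp: rep_CV split: if_splits)
    next
      case False
      have "y \<notin> T" using False assms(4) u 1 by (auto simp: rep_CV split: if_splits)
      hence "d = c" using False assms(4) u 1 by (auto simp: rep_CV split: if_splits)
      thus ?thesis using False \<open>y \<notin> T\<close> assms(3,4) u 1 in_c[of c x] in_c[of c y] ord3[of c] T3[of c]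
        by (auto simp: rep_CV split: if_splits)
    qed
  next
    case (2 d)
    then show ?thesis using assms(3,4) u in_c[of c x] ord3[of c] by (auto simp: rep_CV split: if_splits)
  next
    case (3 d)
    then show ?thesis using assms(3,4) u in_c[of c x] ord3[of c] by (auto simp: rep_CV split: if_splits)
  qed
next
  case (2 c)
  note u = this
  from assms(2) show ?thesis
  proof (cases rule: V_cases)
    case (1 d y)
    then show ?thesis using assms(3,4) u in_c[of d y] ord3[of d] by (auto simp: rep_CV split: if_splits)
  qed (use assms u in auto)
next
  case (3 c)
  note u = this
  from assms(2) show ?thesis
  proof (cases rule: V_cases)
    case (1 d y)
    then show ?thesis using assms(3,4) u in_c[of d y] ord3[of d] by (auto simp: rep_CV split: if_splits)
  qed (use assms u in auto)
qed

lemma max_A1: assumes c: "c \<in> C" and v: "v \<in> V" "rep T v \<noteq> A1 c"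
  shows "\<exists>w\<in>V. rep T w = A1 c \<and> w \<noteq> v \<and> \<not> E v w"
proof (cases "E v (A1 c)")
  case True
  define q where "q = (if p0 c \<notin> T then p0 c else p1 c)"
  have qc: "q \<in> c" using p_in[OF c] q_def by auto
  have rq: "rep T (CV c q) = A1 c" using T3[OF c] ord3[OF c] unfolding q_def by (auto simp: rep_CV)
  have vv: "v = CV c (p0 c) \<or> v = CV c (p1 c)" using True v by (cases v) auto
  show ?thesis
    by (rule bexI[of _ "CV c q"]) (use rq v vv c qc in auto)
next
  case False
  then show ?thesis using v c by (intro bexI[of _ "A1 c"]) auto
qed

lemma max_A2: assumes c: "c \<in> C" and v: "v \<in> V" "rep T v \<noteq> A2 c"
  shows "\<exists>w\<in>V. rep T w = A2 c \<and> w \<noteq> v \<and> \<not> E v w"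
proof (cases "E v (A2 c)")
  case True
  define q where "q = (if p2 c \<notin> T then p2 c else p1 c)"
  have qc: "q \<in> c" using p_in[OF c] q_def by auto
  have rq: "rep T (CV c q) = A2 c" using T3[OF c] ord3[OF c] unfolding q_def by (auto simp: rep_CV)
  have vv: "v = CV c (p1 c) \<or> v = CV c (p2 c)" using True v by (cases v) auto
  show ?thesis
    by (rule bexI[of _ "CV c q"]) (use rq v vv c qc in auto)
next
  case False
  then show ?thesis using v c by (intro bexI[of _ "A2 c"]) auto
qed

lemma max_T: assumes x: "x \<in> T" and v: "v \<in> V" "rep T v \<noteq> CV (cx x) x"
  shows "\<exists>w\<in>V. rep T w = CV (cx x) x \<and> w \<noteq> v \<and> \<not> E v w"
proof -
  have xX: "x \<in> X" using x TX by auto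
  have cxx: "cx x \<in> C" "x \<in> cx x" using cx[OF xX] by auto
  from v(1) show ?thesis
  proof (cases rule: V_cases)
    case (1 c y)
    have "y \<noteq> x" using v(2) x unfolding 1(1) by (auto simp: rep_CV)
    then show ?thesis using cxx x 1 by (intro bexI[of _ "CV (cx x) x"]) (auto simp: rep_CV)
  next
    case (2 c)
    obtain d where d: "d \<in> C" "x \<in> d" "d \<noteq> c" using other[OF xX] by blast
    then show ?thesis using x 2 by (intro bexI[of _ "CV d x"]) (auto simp: rep_CV)
  next
    case (3 c)
    obtain d where d: "d \<in> C" "x \<in> d" "d \<noteq> c" using other[OF xX] by blast
    then show ?thesis using x 3 by (intro bexI[of _ "CV d x"]) (auto simp: rep_CV)
  qed
qed

lemma rep_forms: assumes "u \<in> V"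
  shows "(\<exists>c\<in>C. rep T u = A1 c) \<or> (\<exists>c\<in>C. rep T u = A2 c) \<or> (\<exists>x\<in>T. rep T u = CV (cx x) x)"
  using assms by (cases rule: V_cases) (auto simp: rep_CV)

lemma max_all: assumes "u \<in> V" "v \<in> V" "rep T v \<noteq> rep T u"
  shows "\<exists>w\<in>V. rep T w = rep T u \<and> w \<noteq> v \<and> \<not> E v w"
proof -
  from rep_forms[OF assms(1)] show ?thesis
  proof (elim disjE bexE)
    fix c assume "c \<in> C" "rep T u = A1 c" thus ?thesis using max_A1[of c v] assms by simp
  next
    fix c assume "c \<in> C" "rep T u = A2 c" thus ?thesis using max_A2[of c v] assms by simp
  next
    fix x assume "x \<in> T" "rep T u = CV (cx x) x" thus ?thesis using max_T[of x v] assms by simp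
  qed
qed

lemma dirB: "\<exists>f k. fall_colouring V (compl_adj V E) f k"
proof -
  obtain h :: "'v gvert \<Rightarrow> nat" where h: "inj_on h V" using finite_imp_inj_to_nat_seg[OF finV] by blast
  define f where "f v = Suc (h (rep T v))" for v
  have feq: "f u = f w \<longleftrightarrow> rep T u = rep T w" if "u \<in> V" "w \<in> V" for u w
    using h rep_V that unfolding f_def inj_on_def by auto
  have "fall_colouring V (compl_adj V E) f (card (f ` V))"
    unfolding fall_colouring_def
  proof (intro conjI ballI impI)
    fix u w assume "u \<in> V" "w \<in> V" "compl_adj V E u w"
    thus "f u \<noteq> f w" using feq rep_class unfolding compl_adj_def by blast
  next
    fix v j assume v: "v \<in> V" and j: "j \<in> f ` V" "j \<noteq> f v"
    then obtain u where u: "u \<in> V" "j = f u" by auto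
    have "rep T v \<noteq> rep T u" using feq u v j by auto
    then obtain w where "w \<in> V" "rep T w = rep T u" "w \<noteq> v" "\<not> E v w" using max_all u v by blast
    note w = this
    have "compl_adj V E v w" using w v unfolding compl_adj_def by auto
    moreover have "f w = j" using feq[of w u] w u by simp
    ultimately show "\<exists>w\<in>V. compl_adj V E v w \<and> f w = j" using w by blast
  qed (auto simp: f_def)
  thus ?thesis by blast
qed

end

end

theorem mainTheorem20:
  fixes X :: "'v set" and C :: "'v set set" and ord :: "'v set \<Rightarrow> 'v list" and n :: nat
  assumes "monotone33 X C"
    and "card C = n" and "card X = n"
    and "clause_order C ord"
  shows "(one_satisfiable X C \<longrightarrow>
            real ` fall_spectrum (GPhi_verts C) (compl_adj (GPhi_verts C) (GPhi_adj C ord))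
              = {7 * real n / 3})
       \<and> (\<not> one_satisfiable X C \<longrightarrow>
            fall_spectrum (GPhi_verts C) (compl_adj (GPhi_verts C) (GPhi_adj C ord)) = {})"
proof -
  interpret G33 X C ord using assms(1,4) by unfold_locales
  let ?S = "fall_spectrum V (compl_adj V E)"
  have A: "one_satisfiable X C \<and> 3 * k = 7 * n" if "k \<in> ?S" for k
    using that dirA assms(2) unfolding fall_spectrum_def by blast
  have B: "?S \<noteq> {}" if "one_satisfiable X C"
    using that dirB unfolding one_satisfiable_def fall_spectrum_def by blast
  show ?thesis
  proof (intro conjI impI)
    assume os: "one_satisfiable X C"
    have "real k = 7 * real n / 3" if "k \<in> ?S" for k
    proof -
      have "3 * k = 7 * n" using A that by blast
      hence "3 * real k = 7 * real n" by (metis of_nat_mult of_nat_numeral)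
      thus ?thesis by simp
    qed
    note eqk = this
    obtain k0 where k0: "k0 \<in> ?S" using B[OF os] by blast
    show "real ` ?S = {7 * real n / 3}"
    proof (rule equalityI)
      show "real ` ?S \<subseteq> {7 * real n / 3}" using eqk by auto
      show "{7 * real n / 3} \<subseteq> real ` ?S" using k0 eqk[OF k0] by (metis empty_subsetI image_eqI insert_subset)
    qed
  next
    assume "\<not> one_satisfiable X C"
    thus "?S = {}" using A by blast
  qed
qed

end
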